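(* Let $(S,\mathfrak{n})$ be a complete Noetherian local ring with coefficient field $k$, $\Gamma$ a standard set of monomials in $k[T_1,\dots,T_r]$, and $I$ an $\mathfrak{n}$-primary ideal with a generating sequence $x_1,\dots,x_r$ which is $\Gamma$-expandable. Let $f_1,\dots,f_l\in S$ be such that their images form a $k$-basis of $S/I$. For a positive integer $t$ put $A_{1,t}=\{f_iu(x)\mid 1\le i\le l,\ u\in\Gamma,\ f_iu(x)\notin\mathfrak{n}^t\}$ and $A_{2,t}=\{f_iu(x)\mid 1\le i\le l,\ u\in\Gamma,\ \operatorname{ord}(f_i)+\sum_j\operatorname{ord}(x_j)\deg_{T_j}(u)<t\}$. Then: (1) $S/\mathfrak{n}^t$ is spanned over $k$ by the images of $A_{1,t}$; (2) $A_{1,t}\subseteq A_{2,t}$, so $S/\mathfrak{n}^t$ is spanned by the images of $A_{2,t}$; (3) if $A_{2,t}$ is $k$-linearly independent modulo $\mathfrak{n}^t$, then its image is a $k$-basis of $S/\mathfrak{n}^t$ and $\dim_kS/\mathfrak{n}^t=|A_{2,t}|$.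
   Context: $\operatorname{ord}(f)$ for $f\ne0$ is the integer $t$ with $f\in\mathfrak{n}^t\setminus\mathfrak{n}^{t+1}$ ($\infty$ for $f=0$). A standard set is a set of monomials closed under taking divisors. For $u=T_1^{a_1}\cdots T_r^{a_r}$, $u(x)=x_1^{a_1}\cdots x_r^{a_r}$. A lifting is a map $\sigma:S/I\to S$ with $\sigma(0)=0$ and $\pi\circ\sigma=\mathrm{id}_{S/I}$. $x_1,\dots,x_r$ is $\Gamma$-expandable if for every lifting $\sigma$ every $f\in S$ has a unique representation $f=\sum_{u\in\Gamma}f_uu(x)$ (convergent sum) with all $f_u\in\sigma(S/I)$. *)

theory Defs
  imports Main "HOL-Library.Extended_Nat"
begin

definition is_ideal :: "'a::comm_ring_1 set \<Rightarrow> bool" where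
  "is_ideal J \<longleftrightarrow> 0 \<in> J \<and> (\<forall>a\<in>J. \<forall>b\<in>J. a + b \<in> J) \<and> (\<forall>a\<in>J. \<forall>s. s * a \<in> J)"

definition gen_ideal :: "'a::comm_ring_1 set \<Rightarrow> 'a set" where
  "gen_ideal G = {(\<Sum>i<m. c i * g i) | (m::nat) c g. \<forall>i<m. g i \<in> G}"

fun ideal_pow :: "'a::comm_ring_1 set \<Rightarrow> nat \<Rightarrow> 'a set" where
  "ideal_pow N 0 = UNIV"
| "ideal_pow N (Suc t) = gen_ideal {a * b | a b. a \<in> ideal_pow N t \<and> b \<in> N}"

definition noetherian_ring :: "'a::comm_ring_1 itself \<Rightarrow> bool" where
  "noetherian_ring _ \<longleftrightarrow> (\<forall>J::'a set. is_ideal J \<longrightarrow> (\<exists>G. finite G \<and> J = gen_ideal G))"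

definition local_ring_max :: "'a::comm_ring_1 set \<Rightarrow> bool" where
  "local_ring_max N \<longleftrightarrow> is_ideal N \<and> N \<noteq> UNIV \<and>
     (\<forall>J. is_ideal J \<and> J \<noteq> UNIV \<longrightarrow> J \<subseteq> N)"

definition adic_cauchy :: "'a::comm_ring_1 set \<Rightarrow> (nat \<Rightarrow> 'a) \<Rightarrow> bool" where
  "adic_cauchy N a \<longleftrightarrow> (\<forall>t. \<exists>M. \<forall>m\<ge>M. \<forall>p\<ge>M. a m - a p \<in> ideal_pow N t)"

definition adic_limit :: "'a::comm_ring_1 set \<Rightarrow> (nat \<Rightarrow> 'a) \<Rightarrow> 'a \<Rightarrow> bool" where
  "adic_limit N a L \<longleftrightarrow> (\<forall>t. \<exists>M. \<forall>m\<ge>M. a m - L \<in> ideal_pow N t)"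

definition adic_complete :: "'a::comm_ring_1 set \<Rightarrow> bool" where
  "adic_complete N \<longleftrightarrow> (\<forall>a. adic_cauchy N a \<longrightarrow> (\<exists>L. adic_limit N a L))"

definition complete_noetherian_local :: "'a::comm_ring_1 set \<Rightarrow> bool" where
  "complete_noetherian_local N \<longleftrightarrow>
     noetherian_ring TYPE('a) \<and> local_ring_max N \<and> adic_complete N"

(* K is a coefficient field: a subfield of S mapping bijectively onto S/N *)
definition coefficient_field :: "'a::comm_ring_1 set \<Rightarrow> 'a set \<Rightarrow> bool" where
  "coefficient_field N K \<longleftrightarrow>
     0 \<in> K \<and> 1 \<in> K \<and> (\<forall>a\<in>K. \<forall>b\<in>K. a + b \<in> K \<and> a - b \<in> K \<and> a * b \<in> K) \<and>
     (\<forall>a\<in>K. a \<noteq> 0 \<longrightarrow> (\<exists>b\<in>K. a * b = 1)) \<and>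
     (\<forall>s. \<exists>!c. c \<in> K \<and> s - c \<in> N)"

definition radical :: "'a::comm_ring_1 set \<Rightarrow> 'a set" where
  "radical J = {a. \<exists>m. a ^ m \<in> J}"

definition primary_ideal :: "'a::comm_ring_1 set \<Rightarrow> bool" where
  "primary_ideal J \<longleftrightarrow> is_ideal J \<and> J \<noteq> UNIV \<and>
     (\<forall>a b. a * b \<in> J \<and> a \<notin> J \<longrightarrow> (\<exists>m. b ^ m \<in> J))"

definition primary_to :: "'a::comm_ring_1 set \<Rightarrow> 'a set \<Rightarrow> bool" where
  "primary_to N J \<longleftrightarrow> primary_ideal J \<and> radical J = N"

(* Monomials in T_0,...,T_{r-1} as exponent vectors u :: nat => nat with u j = 0 for j >= r *)
definition monomials :: "nat \<Rightarrow> (nat \<Rightarrow> nat) set" where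
  "monomials r = {u. \<forall>j\<ge>r. u j = 0}"

definition standard_set :: "nat \<Rightarrow> (nat \<Rightarrow> nat) set \<Rightarrow> bool" where
  "standard_set r \<Gamma> \<longleftrightarrow> \<Gamma> \<subseteq> monomials r \<and>
     (\<forall>u\<in>\<Gamma>. \<forall>v. (\<forall>j. v j \<le> u j) \<longrightarrow> v \<in> \<Gamma>)"

definition mono_eval :: "nat \<Rightarrow> (nat \<Rightarrow> 'a::comm_ring_1) \<Rightarrow> (nat \<Rightarrow> nat) \<Rightarrow> 'a" where
  "mono_eval r x u = (\<Prod>j<r. x j ^ u j)"

(* lifting sigma : S/I -> S, represented as a map S -> S constant on cosets of I *)
definition lifting :: "'a::comm_ring_1 set \<Rightarrow> ('a \<Rightarrow> 'a) \<Rightarrow> bool" where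
  "lifting I \<sigma> \<longleftrightarrow> (\<forall>a b. a - b \<in> I \<longrightarrow> \<sigma> a = \<sigma> b) \<and> (\<forall>a. \<sigma> a - a \<in> I) \<and> \<sigma> 0 = 0"

(* N-adically convergent (unordered) sum  f = sum_{u in Gamma} g u * u(x) *)
definition adic_sums :: "'a::comm_ring_1 set \<Rightarrow> nat \<Rightarrow> (nat \<Rightarrow> 'a) \<Rightarrow> (nat \<Rightarrow> nat) set
                          \<Rightarrow> ((nat \<Rightarrow> nat) \<Rightarrow> 'a) \<Rightarrow> 'a \<Rightarrow> bool" where
  "adic_sums N r x \<Gamma> g f \<longleftrightarrow>
     (\<forall>t. \<exists>F0. finite F0 \<and> F0 \<subseteq> \<Gamma> \<and>
        (\<forall>F. finite F \<and> F0 \<subseteq> F \<and> F \<subseteq> \<Gamma> \<longrightarrow>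
              f - (\<Sum>u\<in>F. g u * mono_eval r x u) \<in> ideal_pow N t))"

definition expandable :: "'a::comm_ring_1 set \<Rightarrow> 'a set \<Rightarrow> nat \<Rightarrow> (nat \<Rightarrow> 'a)
                          \<Rightarrow> (nat \<Rightarrow> nat) set \<Rightarrow> bool" where
  "expandable N I r x \<Gamma> \<longleftrightarrow>
     (\<forall>\<sigma>. lifting I \<sigma> \<longrightarrow> (\<forall>f.
        (\<exists>g. (\<forall>u\<in>\<Gamma>. g u \<in> range \<sigma>) \<and> adic_sums N r x \<Gamma> g f) \<and>
        (\<forall>g h. (\<forall>u\<in>\<Gamma>. g u \<in> range \<sigma>) \<and> adic_sums N r x \<Gamma> g f \<and>
               (\<forall>u\<in>\<Gamma>. h u \<in> range \<sigma>) \<and> adic_sums N r x \<Gamma> h f \<longrightarrow>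
               (\<forall>u\<in>\<Gamma>. g u = h u))))"

definition ord :: "'a::comm_ring_1 set \<Rightarrow> 'a \<Rightarrow> enat" where
  "ord N f = (if (\<forall>t. f \<in> ideal_pow N t) then \<infinity> else enat (GREATEST t. f \<in> ideal_pow N t))"

definition spans_mod :: "'a::comm_ring_1 set \<Rightarrow> 'a set \<Rightarrow> 'a set \<Rightarrow> bool" where
  "spans_mod K J A \<longleftrightarrow> (\<forall>s. \<exists>F c. finite F \<and> F \<subseteq> A \<and> (\<forall>a\<in>F. c a \<in> K) \<and>
                              s - (\<Sum>a\<in>F. c a * a) \<in> J)"

definition indep_mod :: "'a::comm_ring_1 set \<Rightarrow> 'a set \<Rightarrow> 'a set \<Rightarrow> bool" where
  "indep_mod K J A \<longleftrightarrow> (\<forall>F c. finite F \<and> F \<subseteq> A \<and> (\<forall>a\<in>F. c a \<in> K) \<and>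
                              (\<Sum>a\<in>F. c a * a) \<in> J \<longrightarrow> (\<forall>a\<in>F. c a = 0))"

definition kdim :: "'a::comm_ring_1 set \<Rightarrow> 'a set \<Rightarrow> nat" where
  "kdim K J = (LEAST m. \<exists>B. finite B \<and> card B = m \<and> spans_mod K J B)"

definition family_basis_mod :: "'a::comm_ring_1 set \<Rightarrow> 'a set \<Rightarrow> nat \<Rightarrow> (nat \<Rightarrow> 'a) \<Rightarrow> bool" where
  "family_basis_mod K I l f \<longleftrightarrow>
     (\<forall>s. \<exists>c. (\<forall>i<l. c i \<in> K) \<and> s - (\<Sum>i<l. c i * f i) \<in> I) \<and>
     (\<forall>c. (\<forall>i<l. c i \<in> K) \<and> (\<Sum>i<l. c i * f i) \<in> I \<longrightarrow> (\<forall>i<l. c i = 0))"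

definition A1 :: "'a::comm_ring_1 set \<Rightarrow> nat \<Rightarrow> (nat \<Rightarrow> 'a) \<Rightarrow> (nat \<Rightarrow> nat) set
                  \<Rightarrow> nat \<Rightarrow> (nat \<Rightarrow> 'a) \<Rightarrow> nat \<Rightarrow> 'a set" where
  "A1 N r x \<Gamma> l f t = {f i * mono_eval r x u | i u. i < l \<and> u \<in> \<Gamma> \<and>
                          f i * mono_eval r x u \<notin> ideal_pow N t}"

definition A2 :: "'a::comm_ring_1 set \<Rightarrow> nat \<Rightarrow> (nat \<Rightarrow> 'a) \<Rightarrow> (nat \<Rightarrow> nat) set
                  \<Rightarrow> nat \<Rightarrow> (nat \<Rightarrow> 'a) \<Rightarrow> nat \<Rightarrow> 'a set" where
  "A2 N r x \<Gamma> l f t = {f i * mono_eval r x u | i u. i < l \<and> u \<in> \<Gamma> \<and>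
                          ord N (f i) + (\<Sum>j<r. ord N (x j) * enat (u j)) < enat t}"

end

theory Submission
  imports Defs "HOL-Library.Extended_Nat"
begin


lemma ideal_neg: "is_ideal J \<Longrightarrow> a \<in> J \<Longrightarrow> - a \<in> J"
  unfolding is_ideal_def by (metis mult_minus1)

lemma ideal_add: "is_ideal J \<Longrightarrow> a \<in> J \<Longrightarrow> b \<in> J \<Longrightarrow> a + b \<in> J"
  unfolding is_ideal_def by blast

lemma ideal_diff: "is_ideal J \<Longrightarrow> a \<in> J \<Longrightarrow> b \<in> J \<Longrightarrow> a - b \<in> J"
  by (metis ideal_add ideal_neg diff_conv_add_uminus)

lemma ideal_mult: "is_ideal J \<Longrightarrow> a \<in> J \<Longrightarrow> s * a \<in> J"
  unfolding is_ideal_def by blast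

lemma ideal_mult2: "is_ideal J \<Longrightarrow> a \<in> J \<Longrightarrow> a * s \<in> J"
  unfolding is_ideal_def by (metis mult.commute)

lemma ideal_0: "is_ideal J \<Longrightarrow> 0 \<in> J"
  unfolding is_ideal_def by blast

lemma ideal_sum: "is_ideal J \<Longrightarrow> (\<And>i. i \<in> X \<Longrightarrow> h i \<in> J) \<Longrightarrow> sum h X \<in> J"
  by (induction X rule: infinite_finite_induct) (auto intro: ideal_0 ideal_add)

lemma sum_lessThan_plus: "(\<Sum>i<m1+(m2::nat). h i) = (\<Sum>i<m1. h i) + (\<Sum>i<m2. h (m1 + i))"
  by (induct m2) (simp_all add: add.assoc)

lemma gen_ideal_iff: "b \<in> gen_ideal G \<longleftrightarrow> (\<exists>(m::nat) (c::nat\<Rightarrow>'a::comm_ring_1) g. b = (\<Sum>i<m. c i * g i) \<and> (\<forall>i<m. g i \<in> G))"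
  by (simp add: gen_ideal_def)

lemma gen_ideal_intro: "(\<forall>i<(m::nat). g i \<in> G) \<Longrightarrow> b = (\<Sum>i<m. c i * g i) \<Longrightarrow> b \<in> gen_ideal G"
  unfolding gen_ideal_iff by blast

lemma gen_ideal_is_ideal: "is_ideal (gen_ideal G)"
  unfolding is_ideal_def
proof (intro conjI ballI allI)
  show "0 \<in> gen_ideal G" unfolding gen_ideal_def by force
next
  fix a b assume "a \<in> gen_ideal G" "b \<in> gen_ideal G"
  then obtain m1 m2 :: nat and c1 g1 c2 g2 :: "nat \<Rightarrow> 'a" where a: "a = (\<Sum>i<m1. c1 i * g1 i)" "\<forall>i<m1. g1 i \<in> G"
     and b: "b = (\<Sum>i<m2. c2 i * g2 i)" "\<forall>i<m2. g2 i \<in> G"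
    unfolding gen_ideal_iff by blast
  define c where "c i = (if i < m1 then c1 i else c2 (i - m1))" for i
  define g where "g i = (if i < m1 then g1 i else g2 (i - m1))" for i
  have "(\<Sum>i<m1+m2. c i * g i) = (\<Sum>i<m1. c i * g i) + (\<Sum>i<m2. c (m1 + i) * g (m1 + i))"
    by (rule sum_lessThan_plus)
  also have "\<dots> = a + b" using a b by (simp add: c_def g_def)
  finally have "a + b = (\<Sum>i<m1+m2. c i * g i)" by simp
  moreover have "\<forall>i<m1+m2. g i \<in> G" using a b by (simp add: g_def)
  ultimately show "a + b \<in> gen_ideal G" by (metis gen_ideal_intro)
next
  fix a s assume "a \<in> gen_ideal G"
  then obtain m :: nat and c g :: "nat \<Rightarrow> 'a" where a: "a = (\<Sum>i<m. c i * g i)" "\<forall>i<m. g i \<in> G"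
    unfolding gen_ideal_iff by blast
  have "s * a = (\<Sum>i<m. (s * c i) * g i)" using a by (simp add: sum_distrib_left mult.assoc)
  then show "s * a \<in> gen_ideal G" using a by (metis gen_ideal_intro)
qed

lemma gen_ideal_in: "g \<in> G \<Longrightarrow> g \<in> gen_ideal G"
  unfolding gen_ideal_def
  by (rule CollectI, rule exI[of _ 1], rule exI[of _ "\<lambda>_. 1"], rule exI[of _ "\<lambda>_. g"]) simp

lemma ideal_pow_ideal: "is_ideal (ideal_pow N t)"
proof (cases t)
  case 0 then show ?thesis by (simp add: is_ideal_def)
next
  case (Suc n) then show ?thesis by (simp only: ideal_pow.simps gen_ideal_is_ideal)
qed

lemma gen_ideal_subset: "is_ideal J \<Longrightarrow> G \<subseteq> J \<Longrightarrow> gen_ideal G \<subseteq> J"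
  unfolding gen_ideal_def by (auto intro!: ideal_sum ideal_mult)

lemma ideal_pow_Suc_subset: "ideal_pow N (Suc t) \<subseteq> ideal_pow N t"
  unfolding ideal_pow.simps
  by (rule gen_ideal_subset[OF ideal_pow_ideal]) (auto intro: ideal_mult2[OF ideal_pow_ideal])

lemma ideal_pow_mono: "p \<le> q \<Longrightarrow> ideal_pow N q \<subseteq> ideal_pow N p"
  by (induction q rule: dec_induct) (use ideal_pow_Suc_subset in blast)+

lemma ideal_pow_mult: "a \<in> ideal_pow N p \<Longrightarrow> b \<in> ideal_pow N q \<Longrightarrow> a * b \<in> ideal_pow N (p + q)"
proof (induction q arbitrary: b)
  case 0 then show ?case by (simp add: ideal_mult2 ideal_pow_ideal)
next
  case (Suc q)
  have "\<exists>(m::nat) (c::nat\<Rightarrow>'a) g. b = (\<Sum>i<m. c i * g i) \<and> (\<forall>i<m. g i \<in> {a * b |a b. a \<in> ideal_pow N q \<and> b \<in> N})"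
    using Suc.prems(2) by (simp only: ideal_pow.simps gen_ideal_iff)
  then obtain m :: nat and c g :: "nat \<Rightarrow> 'a" where b: "b = (\<Sum>i<m. c i * g i)"
     "\<forall>i<m. g i \<in> {a * b |a b. a \<in> ideal_pow N q \<and> b \<in> N}"
    by (elim exE conjE)
  have eqab: "a * b = (\<Sum>i<m. c i * (a * g i))" unfolding b(1) sum_distrib_left by (simp add: ac_simps)
  have gin: "\<forall>i<m. a * g i \<in> {a * b |a b. a \<in> ideal_pow N (p + q) \<and> b \<in> N}"
  proof (intro allI impI)
    fix i assume "i < m"
    then obtain u v where "g i = u * v" "u \<in> ideal_pow N q" "v \<in> N" using b(2) by blast
    then show "a * g i \<in> {a * b |a b. a \<in> ideal_pow N (p + q) \<and> b \<in> N}"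
      using Suc.IH[of u] Suc.prems by (auto simp: mult.assoc[symmetric])
  qed
  have "a * b \<in> gen_ideal {a * b |a b. a \<in> ideal_pow N (p + q) \<and> b \<in> N}"
    by (rule gen_ideal_intro[OF gin eqab])
  then show ?case by simp
qed

lemma N_sub_pow1: "N \<subseteq> ideal_pow N 1"
proof
  fix x assume "x \<in> N"
  then have "x \<in> {a * b |a b. a \<in> ideal_pow N 0 \<and> b \<in> N}" proof -
    have "x = 1 * x" by simp
    then show ?thesis using \<open>x \<in> N\<close> by (intro CollectI exI[of _ 1] exI[of _ x]) simp
  qed
  then show "x \<in> ideal_pow N 1" by (simp add: gen_ideal_in)
qed




lemma ord_ge: "a \<in> ideal_pow N p \<Longrightarrow> enat p \<le> ord N a"
proof -
  assume a: "a \<in> ideal_pow N p"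
  show ?thesis
  proof (cases "\<forall>t. a \<in> ideal_pow N t")
    case True then show ?thesis by (simp add: ord_def)
  next
    case False
    then obtain t0 where t0: "a \<notin> ideal_pow N t0" by blast
    have bnd: "\<forall>y. a \<in> ideal_pow N y \<longrightarrow> y \<le> t0"
      using t0 ideal_pow_mono[of t0] by (meson nat_le_linear subsetD)
    have "p \<le> (GREATEST t. a \<in> ideal_pow N t)" by (rule Greatest_le_nat[of "\<lambda>t. a \<in> ideal_pow N t", OF a]) (use bnd in blast)
    then show ?thesis using False by (simp add: ord_def)
  qed
qed

lemma ord_le: "enat p \<le> ord N a \<Longrightarrow> a \<in> ideal_pow N p"
proof -
  assume p: "enat p \<le> ord N a"
  show ?thesis
  proof (cases "\<forall>t. a \<in> ideal_pow N t")
    case True then show ?thesis by simp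
  next
    case False
    then obtain t0 where t0: "a \<notin> ideal_pow N t0" by blast
    have bnd: "\<forall>y. a \<in> ideal_pow N y \<longrightarrow> y \<le> t0"
      using t0 ideal_pow_mono[of t0] by (meson nat_le_linear subsetD)
    have a0: "a \<in> ideal_pow N 0" by simp
    have G: "a \<in> ideal_pow N (GREATEST t. a \<in> ideal_pow N t)"
      by (rule GreatestI_nat[of "\<lambda>t. a \<in> ideal_pow N t", OF a0]) (use bnd in blast)
    have "p \<le> (GREATEST t. a \<in> ideal_pow N t)" using p False by (simp add: ord_def)
    then show ?thesis using G ideal_pow_mono by blast
  qed
qed

lemma enat_le_by_nat: assumes h: "\<And>p. enat p \<le> x \<Longrightarrow> enat p \<le> y" shows "x \<le> (y::enat)"
proof (cases x)
  case (enat m) then show ?thesis using h[of m] by simp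
next
  case infinity
  show ?thesis
  proof (cases y)
    case (enat n) then show ?thesis using h[of "Suc n"] infinity by simp
  qed simp
qed

lemma ord_mult: "ord N a + ord N b \<le> ord N (a * b)"
proof (rule enat_le_by_nat)
  fix p assume p: "enat p \<le> ord N a + ord N b"
  have "a * b \<in> ideal_pow N p"
  proof (cases "ord N a = \<infinity> \<or> ord N b = \<infinity>")
    case True
    then show ?thesis
    proof
      assume "ord N a = \<infinity>"
      then have "a \<in> ideal_pow N p" using ord_le by (metis enat_ord_code(3))
      then show ?thesis by (simp add: ideal_mult2 ideal_pow_ideal)
    next
      assume "ord N b = \<infinity>"
      then have "b \<in> ideal_pow N p" using ord_le by (metis enat_ord_code(3))
      then show ?thesis by (simp add: ideal_mult ideal_pow_ideal)
    qed
  next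
    case False
    then obtain m k where mk: "ord N a = enat m" "ord N b = enat k" by auto
    then have "a \<in> ideal_pow N m" "b \<in> ideal_pow N k" using ord_le[of m N a] ord_le[of k N b] by auto
    then have "a * b \<in> ideal_pow N (m + k)" by (rule ideal_pow_mult)
    moreover have "p \<le> m + k" using p mk by simp
    ultimately show ?thesis using ideal_pow_mono by blast
  qed
  then show "enat p \<le> ord N (a * b)" by (rule ord_ge)
qed

lemma ord_pow: "ord N a * enat n \<le> ord N (a ^ n)"
proof (induction n)
  case 0 then show ?case by (simp add: enat_0)
next
  case (Suc n)
  have "ord N a * enat (Suc n) = ord N a + ord N a * enat n"
  proof -
    have "enat (Suc n) = 1 + enat n" by (simp add: one_enat_def)
    then show ?thesis by (simp add: distrib_left)
  qed
  also have "\<dots> \<le> ord N a + ord N (a ^ n)" using Suc by (rule add_left_mono)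
  also have "\<dots> \<le> ord N (a ^ Suc n)" by (metis ord_mult power_Suc)
  finally show ?case .
qed

lemma ord_prod: "(\<Sum>j<(r::nat). ord N (x j) * enat (u j)) \<le> ord N (\<Prod>j<r. x j ^ u j)"
proof (induction r)
  case 0 then show ?case by simp
next
  case (Suc r)
  have "(\<Sum>j<Suc r. ord N (x j) * enat (u j)) = (\<Sum>j<r. ord N (x j) * enat (u j)) + ord N (x r) * enat (u r)"
    by simp
  also have "\<dots> \<le> ord N (\<Prod>j<r. x j ^ u j) + ord N (x r ^ u r)"
    using Suc ord_pow by (rule add_mono)
  also have "\<dots> \<le> ord N (\<Prod>j<Suc r. x j ^ u j)" using ord_mult by simp
  finally show ?case .
qed




lemma K_sum: "coefficient_field N K \<Longrightarrow> (\<And>i. i \<in> X \<Longrightarrow> h i \<in> K) \<Longrightarrow> sum h X \<in> K"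
  unfolding coefficient_field_def
  by (induction X rule: infinite_finite_induct) auto

lemma K_neg: "coefficient_field N K \<Longrightarrow> a \<in> K \<Longrightarrow> - a \<in> K"
  unfolding coefficient_field_def by (metis diff_0)

lemma K_mult: "coefficient_field N K \<Longrightarrow> a \<in> K \<Longrightarrow> b \<in> K \<Longrightarrow> a * b \<in> K"
  unfolding coefficient_field_def by blast

lemma K_diff: "coefficient_field N K \<Longrightarrow> a \<in> K \<Longrightarrow> b \<in> K \<Longrightarrow> a - b \<in> K"
  unfolding coefficient_field_def by blast

lemma K_1: "coefficient_field N K \<Longrightarrow> 1 \<in> K"
  unfolding coefficient_field_def by blast

lemma K_inv: "coefficient_field N K \<Longrightarrow> a \<in> K \<Longrightarrow> a \<noteq> 0 \<Longrightarrow> \<exists>b\<in>K. a * b = 1"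
  unfolding coefficient_field_def by blast

lemma indep_use:
  assumes "indep_mod K J A" "finite F" "F \<subseteq> A" "\<And>a. a \<in> F \<Longrightarrow> c a \<in> K" "(\<Sum>a\<in>F. c a * a) \<in> J" "a \<in> F"
  shows "c a = 0"
  using assms unfolding indep_mod_def by blast

lemma exchange:
  fixes J K :: "'a::comm_ring_1 set"
  assumes J: "is_ideal J" and K: "coefficient_field N K" and one: "(1::'a) \<noteq> 0"
  shows "finite B \<Longrightarrow> \<forall>A. finite A \<and> indep_mod K J A \<and>
     (\<forall>a\<in>A. \<exists>d. (\<forall>b\<in>B. d b \<in> K) \<and> a - (\<Sum>b\<in>B. d b * b) \<in> J) \<longrightarrow> card A \<le> card B"
proof (induction B rule: finite_induct)
  case empty
  show ?case
  proof (intro allI impI)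
    fix A assume H: "finite A \<and> indep_mod K J A \<and> (\<forall>a\<in>A. \<exists>d. (\<forall>b\<in>{}. d b \<in> K) \<and> a - (\<Sum>b\<in>{}. d b * b) \<in> J)"
    have "A = {}"
    proof (rule ccontr)
      assume "A \<noteq> {}" then obtain a where a: "a \<in> A" by blast
      then have "a \<in> J" using H by auto
      then have "(1::'a) = 0" using indep_use[of K J A "{a}" "\<lambda>_. 1" a] H a K_1[OF K] by auto
      then show False using one by simp
    qed
    then show "card A \<le> card {}" by simp
  qed
next
  case (insert b B)
  show ?case
  proof (intro allI impI)
    fix A assume H: "finite A \<and> indep_mod K J A \<and>
      (\<forall>a\<in>A. \<exists>d. (\<forall>b'\<in>insert b B. d b' \<in> K) \<and> a - (\<Sum>b'\<in>insert b B. d b' * b') \<in> J)"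
    then have finA: "finite A" and indA: "indep_mod K J A" by auto
    from H obtain d where d: "\<And>a. a \<in> A \<Longrightarrow> (\<forall>b'\<in>insert b B. d a b' \<in> K) \<and> a - (\<Sum>b'\<in>insert b B. d a b' * b') \<in> J"
      by metis
    have sumins: "(\<Sum>b'\<in>insert b B. d a b' * b') = d a b * b + (\<Sum>b'\<in>B. d a b' * b')" for a
      using insert.hyps by simp
    show "card A \<le> card (insert b B)"
    proof (cases "\<forall>a\<in>A. d a b = 0")
      case True
      have "\<forall>a\<in>A. \<exists>d. (\<forall>b\<in>B. d b \<in> K) \<and> a - (\<Sum>b\<in>B. d b * b) \<in> J"
      proof
        fix a assume a: "a \<in> A"
        show "\<exists>d. (\<forall>b\<in>B. d b \<in> K) \<and> a - (\<Sum>b\<in>B. d b * b) \<in> J"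
          by (rule exI[of _ "d a"]) (use d[OF a] True a sumins[of a] in auto)
      qed
      then have "card A \<le> card B" using insert.IH finA indA by blast
      then show ?thesis using insert.hyps by simp
    next
      case False
      then obtain a0 where a0: "a0 \<in> A" "d a0 b \<noteq> 0" by blast
      have "d a0 b \<in> K" using d[OF a0(1)] by simp
      then obtain \<beta> where \<beta>: "\<beta> \<in> K" "d a0 b * \<beta> = 1" using K_inv[OF K] a0 by blast
      define \<gamma> where "\<gamma> a = d a b * \<beta>" for a
      define \<phi> where "\<phi> a = a - \<gamma> a * a0" for a
      have \<gamma>K: "a \<in> A \<Longrightarrow> \<gamma> a \<in> K" for a using d[of a] \<beta> K_mult[OF K] by (simp add: \<gamma>_def)
      have \<gamma>key: "\<gamma> a * d a0 b = d a b" for a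
      proof -
        have "\<gamma> a * d a0 b = d a b * (d a0 b * \<beta>)" by (simp add: \<gamma>_def ac_simps)
        then show ?thesis using \<beta>(2) by simp
      qed
      define A' where "A' = \<phi> ` (A - {a0})"
      have inj: "inj_on \<phi> (A - {a0})"
      proof (rule inj_onI, rule ccontr)
        fix a1 a2 assume a1: "a1 \<in> A - {a0}" and a2: "a2 \<in> A - {a0}" and eq: "\<phi> a1 = \<phi> a2" and ne: "a1 \<noteq> a2"
        define C where "C a = (if a = a1 then 1 else if a = a2 then -1 else - (\<gamma> a1 - \<gamma> a2))" for a
        have n1: "a0 \<noteq> a1" "a0 \<noteq> a2" using a1 a2 by auto
        have "(\<Sum>a\<in>{a0, a1, a2}. C a * a) = C a0 * a0 + (C a1 * a1 + C a2 * a2)"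
          using n1 ne by simp
        also have "\<dots> = a1 - a2 - (\<gamma> a1 - \<gamma> a2) * a0"
          using n1 ne by (simp add: C_def algebra_simps)
        also have "\<dots> = \<phi> a1 - \<phi> a2" by (simp add: \<phi>_def algebra_simps)
        also have "\<dots> = 0" using eq by simp
        finally have sJ3: "(\<Sum>a\<in>{a0, a1, a2}. C a * a) \<in> J" using ideal_0[OF J] by simp
        have "C a1 = 0"
          by (rule indep_use[OF indA _ _ _ sJ3]) (use a0 a1 a2 in \<open>auto simp: C_def intro: K_1[OF K] K_neg[OF K] K_diff[OF K] \<gamma>K\<close>)
        then show False using one by (simp add: C_def)
      qed
      have cardA': "card A' = card A - 1"
        using inj a0 finA by (simp add: A'_def card_image)
      have span': "\<forall>a'\<in>A'. \<exists>e. (\<forall>b\<in>B. e b \<in> K) \<and> a' - (\<Sum>b\<in>B. e b * b) \<in> J"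
      proof
        fix a' assume "a' \<in> A'"
        then obtain a where a: "a \<in> A" "a' = \<phi> a" by (auto simp: A'_def)
        define e where "e b' = d a b' - \<gamma> a * d a0 b'" for b'
        have eK: "\<forall>b\<in>B. e b \<in> K"
          using d[OF a(1)] d[OF a0(1)] \<gamma>K[OF a(1)] by (auto simp: e_def intro!: K_diff[OF K] K_mult[OF K])
        have j1: "a - (d a b * b + (\<Sum>b'\<in>B. d a b' * b')) \<in> J" using d[OF a(1)] sumins[of a] by simp
        have j2: "a0 - (d a0 b * b + (\<Sum>b'\<in>B. d a0 b' * b')) \<in> J" using d[OF a0(1)] sumins[of a0] by simp
        have se: "(\<Sum>b\<in>B. e b * b) = (\<Sum>b'\<in>B. d a b' * b') - \<gamma> a * (\<Sum>b'\<in>B. d a0 b' * b')"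
          by (simp add: e_def algebra_simps sum_subtractf sum_distrib_left)
        have "a' - (\<Sum>b\<in>B. e b * b) = (a - (d a b * b + (\<Sum>b'\<in>B. d a b' * b')))
             + (- \<gamma> a) * (a0 - (d a0 b * b + (\<Sum>b'\<in>B. d a0 b' * b'))) + (d a b - \<gamma> a * d a0 b) * b"
          unfolding se a(2) \<phi>_def by (simp add: algebra_simps)
        also have "\<dots> = (a - (d a b * b + (\<Sum>b'\<in>B. d a b' * b')))
             + (- \<gamma> a) * (a0 - (d a0 b * b + (\<Sum>b'\<in>B. d a0 b' * b')))"
          using \<gamma>key[of a] by simp
        finally have "a' - (\<Sum>b\<in>B. e b * b) \<in> J"
          using ideal_add[OF J j1 ideal_mult[OF J j2, of "- \<gamma> a"]] by simp
        then show "\<exists>e. (\<forall>b\<in>B. e b \<in> K) \<and> a' - (\<Sum>b\<in>B. e b * b) \<in> J" using eK by blast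
      qed
      have indep': "indep_mod K J A'"
        unfolding indep_mod_def
      proof (intro allI impI ballI)
        fix F c a' assume Fc: "finite F \<and> F \<subseteq> A' \<and> (\<forall>a\<in>F. c a \<in> K) \<and> (\<Sum>a\<in>F. c a * a) \<in> J"
          and a': "a' \<in> F"
        define G where "G = {a \<in> A - {a0}. \<phi> a \<in> F}"
        have FG: "F = \<phi> ` G" using Fc by (auto simp: G_def A'_def)
        have injG: "inj_on \<phi> G" using inj by (rule inj_on_subset) (auto simp: G_def)
        have finG: "finite G" using finA by (auto simp: G_def)
        have a0G: "a0 \<notin> G" by (simp add: G_def)
        define C where "C a = (if a = a0 then - (\<Sum>x\<in>G. c (\<phi> x) * \<gamma> x) else c (\<phi> a))" for a
        have "(\<Sum>a\<in>F. c a * a) = (\<Sum>x\<in>G. c (\<phi> x) * \<phi> x)"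
          unfolding FG by (simp add: sum.reindex[OF injG])
        also have "\<dots> = (\<Sum>x\<in>G. c (\<phi> x) * x - (c (\<phi> x) * \<gamma> x) * a0)"
        proof (rule sum.cong[OF refl])
          fix x
          have "y * \<phi> x = y * x - (y * \<gamma> x) * a0" for y by (simp add: \<phi>_def algebra_simps)
          then show "c (\<phi> x) * \<phi> x = c (\<phi> x) * x - (c (\<phi> x) * \<gamma> x) * a0" .
        qed
        also have "\<dots> = (\<Sum>x\<in>G. c (\<phi> x) * x) - (\<Sum>x\<in>G. c (\<phi> x) * \<gamma> x) * a0"
          by (simp add: sum_subtractf sum_distrib_right)
        also have "\<dots> = (\<Sum>x\<in>insert a0 G. C x * x)"
        proof -
          have "(\<Sum>x\<in>G. C x * x) = (\<Sum>x\<in>G. c (\<phi> x) * x)"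
            by (rule sum.cong[OF refl]) (use a0G in \<open>auto simp: C_def\<close>)
          then show ?thesis using finG a0G by (simp add: C_def)
        qed
        finally have sJ: "(\<Sum>x\<in>insert a0 G. C x * x) \<in> J" using Fc by simp
        obtain g where g: "g \<in> G" "a' = \<phi> g" using a' FG by blast
        have CK: "C x \<in> K" if "x \<in> insert a0 G" for x
        proof (cases "x = a0")
          case True
          have "(\<Sum>x\<in>G. c (\<phi> x) * \<gamma> x) \<in> K"
            by (rule K_sum[OF K], rule K_mult[OF K]) (use Fc \<gamma>K in \<open>auto simp: G_def\<close>)
          then show ?thesis using True by (simp add: C_def K_neg[OF K])
        next
          case False then show ?thesis using that Fc by (auto simp: C_def G_def)
        qed
        have "C g = 0"
          by (rule indep_use[OF indA _ _ _ sJ]) (use finG a0 g CK in \<open>auto simp: G_def\<close>)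
        moreover have "g \<noteq> a0" using g a0G by blast
        ultimately show "c a' = 0" using g by (simp add: C_def)
      qed
      have "finite A'" using finA by (simp add: A'_def)
      then have "card A' \<le> card B" using insert.IH indep' span' by blast
      moreover have "card A \<ge> 1" using a0 finA by (metis One_nat_def Suc_leI card_gt_0_iff empty_iff)
      ultimately show ?thesis using cardA' insert.hyps by simp
    qed
  qed
qed




lemma collect:
  fixes J K :: "'a::comm_ring_1 set"
  assumes J: "is_ideal J" and K: "coefficient_field N K" and X: "finite X"
    and CK: "\<And>p. p \<in> X \<Longrightarrow> Cf p \<in> K"
    and PA: "\<And>p. p \<in> X \<Longrightarrow> P p \<in> A \<or> P p \<in> J"
    and s: "s - (\<Sum>p\<in>X. Cf p * P p) \<in> J"
  shows "\<exists>F c. finite F \<and> F \<subseteq> A \<and> (\<forall>a\<in>F. c a \<in> K) \<and> s - (\<Sum>a\<in>F. c a * a) \<in> J"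
proof -
  define Y where "Y = P ` X"
  define c where "c a = (\<Sum>p\<in>{p \<in> X. P p = a}. Cf p)" for a
  have finY: "finite Y" using X by (simp add: Y_def)
  have "(\<Sum>p\<in>X. Cf p * P p) = (\<Sum>a\<in>Y. \<Sum>p\<in>{p \<in> X. P p = a}. Cf p * P p)"
    unfolding Y_def by (rule sum.image_gen[OF X])
  also have "\<dots> = (\<Sum>a\<in>Y. c a * a)"
  proof (rule sum.cong[OF refl])
    fix a
    have "(\<Sum>p\<in>{p \<in> X. P p = a}. Cf p * P p) = (\<Sum>p\<in>{p \<in> X. P p = a}. Cf p * a)"
      by (rule sum.cong) auto
    then show "(\<Sum>p\<in>{p \<in> X. P p = a}. Cf p * P p) = c a * a"
      by (simp add: c_def sum_distrib_right)
  qed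
  also have "\<dots> = (\<Sum>a\<in>Y \<inter> A. c a * a) + (\<Sum>a\<in>Y - A. c a * a)"
    using finY by (metis sum.Int_Diff)
  finally have eq: "(\<Sum>p\<in>X. Cf p * P p) = (\<Sum>a\<in>Y \<inter> A. c a * a) + (\<Sum>a\<in>Y - A. c a * a)" .
  have rest: "(\<Sum>a\<in>Y - A. c a * a) \<in> J"
    by (rule ideal_sum[OF J]) (use PA in \<open>auto simp: Y_def intro: ideal_mult[OF J]\<close>)
  have e2: "s - (\<Sum>a\<in>Y \<inter> A. c a * a) = (s - (\<Sum>p\<in>X. Cf p * P p)) + (\<Sum>a\<in>Y - A. c a * a)"
    using eq by simp
  have "s - (\<Sum>a\<in>Y \<inter> A. c a * a) \<in> J" unfolding e2 by (rule ideal_add[OF J s rest])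
  moreover have "\<forall>a\<in>Y \<inter> A. c a \<in> K"
    using CK by (auto simp: c_def intro!: K_sum[OF K])
  ultimately show ?thesis using finY by (intro exI[of _ "Y \<inter> A"] exI[of _ c]) auto
qed

lemma spans_full:
  assumes "spans_mod K J B" "finite B" "coefficient_field N K"
  shows "\<exists>d. (\<forall>b\<in>B. d b \<in> K) \<and> s - (\<Sum>b\<in>B. d b * b) \<in> J"
proof -
  have "\<exists>F c. finite F \<and> F \<subseteq> B \<and> (\<forall>a\<in>F. c a \<in> K) \<and> s - (\<Sum>a\<in>F. c a * a) \<in> J"
    using assms(1) unfolding spans_mod_def by (rule spec)
  then obtain F c where Fc: "finite F" "F \<subseteq> B" "\<forall>a\<in>F. c a \<in> K" "s - (\<Sum>a\<in>F. c a * a) \<in> J"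
    by (elim exE conjE)
  define d where "d b = (if b \<in> F then c b else 0)" for b
  have "(\<Sum>b\<in>B. d b * b) = (\<Sum>b\<in>B. if b \<in> F then c b * b else 0)"
    by (rule sum.cong) (auto simp: d_def)
  also have "\<dots> = (\<Sum>b\<in>B \<inter> F. c b * b)" using assms(2) by (simp add: sum.inter_restrict)
  also have "B \<inter> F = F" using Fc by blast
  finally have "(\<Sum>b\<in>B. d b * b) = (\<Sum>a\<in>F. c a * a)" .
  moreover have "\<forall>b\<in>B. d b \<in> K" using Fc assms(3) by (auto simp: d_def coefficient_field_def)
  ultimately show ?thesis using Fc(4) by (intro exI[of _ d]) simp
qed

lemma spans_mono: assumes "spans_mod K J A" "A \<subseteq> B" shows "spans_mod K J B"
  unfolding spans_mod_def
proof
  fix s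
  have "\<exists>F c. finite F \<and> F \<subseteq> A \<and> (\<forall>a\<in>F. c a \<in> K) \<and> s - (\<Sum>a\<in>F. c a * a) \<in> J"
    using assms(1) unfolding spans_mod_def by (rule spec)
  then obtain F c where Fc: "finite F" "F \<subseteq> A" "\<forall>a\<in>F. c a \<in> K" "s - (\<Sum>a\<in>F. c a * a) \<in> J"
    by (elim exE conjE)
  have "F \<subseteq> B" using Fc(2) assms(2) by (rule subset_trans)
  then show "\<exists>F c. finite F \<and> F \<subseteq> B \<and> (\<forall>a\<in>F. c a \<in> K) \<and> s - (\<Sum>a\<in>F. c a * a) \<in> J"
    using Fc by (intro exI[of _ F] exI[of _ c]) simp
qed

theorem corollary4p2:
  fixes N K I :: "'a::comm_ring_1 set"
    and r l t :: nat
    and x f :: "nat \<Rightarrow> 'a"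
    and \<Gamma> :: "(nat \<Rightarrow> nat) set"
  assumes "complete_noetherian_local N"
    and "coefficient_field N K"
    and "standard_set r \<Gamma>"
    and "primary_to N I"
    and "I = gen_ideal {x j | j. j < r}"
    and "expandable N I r x \<Gamma>"
    and "family_basis_mod K I l f"
    and "t > 0"
  shows "spans_mod K (ideal_pow N t) (A1 N r x \<Gamma> l f t)
       \<and> A1 N r x \<Gamma> l f t \<subseteq> A2 N r x \<Gamma> l f t
       \<and> spans_mod K (ideal_pow N t) (A2 N r x \<Gamma> l f t)
       \<and> (indep_mod K (ideal_pow N t) (A2 N r x \<Gamma> l f t) \<longrightarrow>
            finite (A2 N r x \<Gamma> l f t)
          \<and> spans_mod K (ideal_pow N t) (A2 N r x \<Gamma> l f t)
          \<and> kdim K (ideal_pow N t) = card (A2 N r x \<Gamma> l f t))"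
proof -
  note K = assms(2)
  define J where "J = ideal_pow N t"
  have JI: "is_ideal J" by (simp add: J_def ideal_pow_ideal)
  have Nloc: "local_ring_max N" using assms(1) by (simp add: complete_noetherian_local_def)
  then have NI: "is_ideal N" and NU: "N \<noteq> UNIV" by (auto simp: local_ring_max_def)
  have one: "(1::'a) \<noteq> 0"
  proof
    assume "(1::'a) = 0"
    then have "a = 0" for a :: 'a by (metis mult_1 mult_zero_left)
    then have "N = UNIV" using ideal_0[OF NI] by (metis UNIV_eq_I)
    then show False using NU by simp
  qed
  have II: "is_ideal I" using assms(4) by (simp add: primary_to_def primary_ideal_def)
  have xN: "x j \<in> N" if "j < r" for j
  proof -
    have "x j \<in> I" unfolding assms(5) by (rule gen_ideal_in) (use that in blast)
    then have "x j \<in> radical I" unfolding radical_def by (intro CollectI exI[of _ 1]) simp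
    then show ?thesis using assms(4) by (simp add: primary_to_def)
  qed
  have basis1: "\<forall>s. \<exists>c. (\<forall>i<l. c i \<in> K) \<and> s - (\<Sum>i<l. c i * f i) \<in> I"
    using assms(7) unfolding family_basis_mod_def by (rule conjunct1)
  have b2: "\<forall>c. (\<forall>i<l. c i \<in> K) \<and> (\<Sum>i<l. c i * f i) \<in> I \<longrightarrow> (\<forall>i<l. c i = 0)"
    using assms(7) unfolding family_basis_mod_def by (rule conjunct2)
  have basis2: "\<And>c. (\<forall>i<l. c i \<in> K) \<Longrightarrow> (\<Sum>i<l. c i * f i) \<in> I \<Longrightarrow> (\<forall>i<l. c i = 0)"
    using b2 by blast
  define co where "co y = (SOME c. (\<forall>i<l. c i \<in> K) \<and> y - (\<Sum>i<l. c i * f i) \<in> I)" for y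
  have co: "(\<forall>i<l. co y i \<in> K) \<and> y - (\<Sum>i<l. co y i * f i) \<in> I" for y
    unfolding co_def by (rule someI_ex[OF spec[OF basis1, of y]])
  have uniq: "\<forall>i<l. c i = c' i" if "\<forall>i<l. c i \<in> K" "y - (\<Sum>i<l. c i * f i) \<in> I"
    "\<forall>i<l. c' i \<in> K" "y - (\<Sum>i<l. c' i * f i) \<in> I" for c c' y
  proof -
    have e: "(\<Sum>i<l. (c i - c' i) * f i) = (y - (\<Sum>i<l. c' i * f i)) - (y - (\<Sum>i<l. c i * f i))"
      by (simp add: algebra_simps sum_subtractf)
    have i1: "(\<Sum>i<l. (c i - c' i) * f i) \<in> I" unfolding e by (rule ideal_diff[OF II that(4) that(2)])
    have i2: "\<forall>i<l. c i - c' i \<in> K" using that by (simp add: K_diff[OF K])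
    have "\<forall>i<l. c i - c' i = 0" by (rule basis2[OF i2 i1])
    then show ?thesis by simp
  qed
  define \<sigma> where "\<sigma> y = (\<Sum>i<l. co y i * f i)" for y
  have lift: "lifting I \<sigma>"
    unfolding lifting_def
  proof (intro conjI allI impI)
    fix a b assume ab: "a - b \<in> I"
    have e: "b - (\<Sum>i<l. co a i * f i) = (a - (\<Sum>i<l. co a i * f i)) - (a - b)" by simp
    have "b - (\<Sum>i<l. co a i * f i) \<in> I" unfolding e by (rule ideal_diff[OF II conjunct2[OF co[of a]] ab])
    then have "\<forall>i<l. co a i = co b i"
      by (rule uniq[OF conjunct1[OF co[of a]] _ conjunct1[OF co[of b]] conjunct2[OF co[of b]]])
    then show "\<sigma> a = \<sigma> b" unfolding \<sigma>_def by (intro sum.cong) auto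
  next
    fix a
    show "\<sigma> a - a \<in> I" using ideal_neg[OF II conjunct2[OF co[of a]]] by (simp add: \<sigma>_def)
  next
    have "\<forall>i<l. co 0 i = (\<lambda>_. 0) i"
      by (rule uniq[of "co 0" 0]) (use co[of 0] ideal_0[OF II] K in \<open>auto simp: coefficient_field_def\<close>)
    then show "\<sigma> 0 = 0" by (simp add: \<sigma>_def)
  qed
  have span1: "spans_mod K J (A1 N r x \<Gamma> l f t)"
    unfolding spans_mod_def
  proof
    fix s
    have E0: "\<forall>\<sigma>. lifting I \<sigma> \<longrightarrow> (\<forall>f.
        (\<exists>g. (\<forall>u\<in>\<Gamma>. g u \<in> range \<sigma>) \<and> adic_sums N r x \<Gamma> g f) \<and>
        (\<forall>g h. (\<forall>u\<in>\<Gamma>. g u \<in> range \<sigma>) \<and> adic_sums N r x \<Gamma> g f \<and>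
               (\<forall>u\<in>\<Gamma>. h u \<in> range \<sigma>) \<and> adic_sums N r x \<Gamma> h f \<longrightarrow>
               (\<forall>u\<in>\<Gamma>. g u = h u)))"
      using assms(6) unfolding expandable_def .
    have "\<exists>g. (\<forall>u\<in>\<Gamma>. g u \<in> range \<sigma>) \<and> adic_sums N r x \<Gamma> g s"
      using spec[OF mp[OF spec[OF E0, of \<sigma>] lift], of s] by (rule conjunct1)
    then obtain g where g: "\<forall>u\<in>\<Gamma>. g u \<in> range \<sigma>" "adic_sums N r x \<Gamma> g s"
      by (elim exE conjE)
    have "\<exists>F0. finite F0 \<and> F0 \<subseteq> \<Gamma> \<and>
        (\<forall>F. finite F \<and> F0 \<subseteq> F \<and> F \<subseteq> \<Gamma> \<longrightarrow>
              s - (\<Sum>u\<in>F. g u * mono_eval r x u) \<in> ideal_pow N t)"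
      using g(2) unfolding adic_sums_def by (rule spec)
    then obtain F0 where F0a: "finite F0" "F0 \<subseteq> \<Gamma>" and
      F0b: "\<forall>F. finite F \<and> F0 \<subseteq> F \<and> F \<subseteq> \<Gamma> \<longrightarrow>
              s - (\<Sum>u\<in>F. g u * mono_eval r x u) \<in> ideal_pow N t"
      by (elim exE conjE)
    have "s - (\<Sum>u\<in>F0. g u * mono_eval r x u) \<in> J"
      unfolding J_def using F0a by (intro mp[OF spec[OF F0b, of F0]]) simp
    note F0 = F0a this
    have "\<forall>u\<in>\<Gamma>. \<exists>y. g u = \<sigma> y" using g(1) by (simp add: image_iff)
    then obtain w where w: "\<forall>u\<in>\<Gamma>. g u = \<sigma> (w u)" by (elim bchoice[THEN exE])
    define Cf where "Cf p = co (w (fst p)) (snd p)" for p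
    define P where "P p = f (snd p) * mono_eval r x (fst p)" for p
    have "(\<Sum>u\<in>F0. g u * mono_eval r x u) = (\<Sum>u\<in>F0. \<Sum>i<l. Cf (u, i) * P (u, i))"
    proof (rule sum.cong[OF refl])
      fix u assume "u \<in> F0"
      then have "u \<in> \<Gamma>" using F0(2) by blast
      then have "g u = (\<Sum>i<l. co (w u) i * f i)" using w by (simp add: \<sigma>_def)
      then show "g u * mono_eval r x u = (\<Sum>i<l. Cf (u, i) * P (u, i))"
        by (simp add: Cf_def P_def sum_distrib_right mult.assoc)
    qed
    also have "\<dots> = (\<Sum>p\<in>F0 \<times> {..<l}. Cf p * P p)"
      by (simp add: sum.cartesian_product case_prod_beta)
    finally have sX: "s - (\<Sum>p\<in>F0 \<times> {..<l}. Cf p * P p) \<in> J" using F0 by simp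
    show "\<exists>F c. finite F \<and> F \<subseteq> A1 N r x \<Gamma> l f t \<and> (\<forall>a\<in>F. c a \<in> K) \<and> s - (\<Sum>a\<in>F. c a * a) \<in> J"
    proof (rule collect[OF JI K _ _ _ sX])
      show "finite (F0 \<times> {..<l})" using F0 by simp
    next
      fix p assume "p \<in> F0 \<times> {..<l}"
      then show "Cf p \<in> K" using co by (auto simp: Cf_def)
    next
      fix p assume p: "p \<in> F0 \<times> {..<l}"
      show "P p \<in> A1 N r x \<Gamma> l f t \<or> P p \<in> J"
      proof (cases "P p \<in> J")
        case False
        then show ?thesis using p F0 unfolding A1_def J_def P_def by fastforce
      qed simp
    qed
  qed
  have sub: "A1 N r x \<Gamma> l f t \<subseteq> A2 N r x \<Gamma> l f t"
  proof
    fix z assume "z \<in> A1 N r x \<Gamma> l f t"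
    then obtain i u where iu: "z = f i * mono_eval r x u" "i < l" "u \<in> \<Gamma>" "z \<notin> ideal_pow N t"
      unfolding A1_def by blast
    have "ord N (f i) + (\<Sum>j<r. ord N (x j) * enat (u j)) < enat t"
    proof (rule ccontr)
      assume "\<not> ?thesis"
      then have "enat t \<le> ord N (f i) + (\<Sum>j<r. ord N (x j) * enat (u j))" by simp
      also have "\<dots> \<le> ord N (f i) + ord N (mono_eval r x u)"
        unfolding mono_eval_def by (rule add_left_mono[OF ord_prod])
      also have "\<dots> \<le> ord N z" unfolding iu(1) by (rule ord_mult)
      finally have "z \<in> ideal_pow N t" by (rule ord_le)
      then show False using iu by simp
    qed
    then show "z \<in> A2 N r x \<Gamma> l f t" unfolding A2_def using iu by blast
  qed
  have fin2: "finite (A2 N r x \<Gamma> l f t)"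
  proof -
    define W where "W = {w::nat\<Rightarrow>nat. \<forall>j. (j \<in> {..<r} \<longrightarrow> w j \<in> {..<t}) \<and> (j \<notin> {..<r} \<longrightarrow> w j = 0)}"
    have finW: "finite W" unfolding W_def by (rule finite_set_of_finite_funs) auto
    have "A2 N r x \<Gamma> l f t \<subseteq> (\<lambda>(i, w). f i * mono_eval r x w) ` ({..<l} \<times> W)"
    proof
      fix z assume "z \<in> A2 N r x \<Gamma> l f t"
      then obtain i u where iu: "z = f i * mono_eval r x u" "i < l" "u \<in> \<Gamma>"
        "ord N (f i) + (\<Sum>j<r. ord N (x j) * enat (u j)) < enat t"
        unfolding A2_def by blast
      have "u \<in> W"
        unfolding W_def mem_Collect_eq
      proof (intro allI conjI impI)
        fix j assume "j \<notin> {..<r}"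
        then show "u j = 0" using iu(3) assms(3) by (auto simp: standard_set_def monomials_def)
      next
        fix j assume j: "j \<in> {..<r}"
        have "1 \<le> ord N (x j)"
          using ord_ge[of "x j" N 1] xN[of j] j N_sub_pow1[of N] by (auto simp: one_enat_def)
        then have "1 * enat (u j) \<le> ord N (x j) * enat (u j)" by (rule mult_right_mono) simp
        also have "\<dots> \<le> (\<Sum>j<r. ord N (x j) * enat (u j))"
          by (rule member_le_sum) (use j in auto)
        also have "\<dots> \<le> ord N (f i) + (\<Sum>j<r. ord N (x j) * enat (u j))"
          by (rule add_increasing) auto
        also have "\<dots> < enat t" by (rule iu(4))
        finally show "u j \<in> {..<t}" by simp
      qed
      then show "z \<in> (\<lambda>(i, w). f i * mono_eval r x w) ` ({..<l} \<times> W)" using iu by force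
    qed
    then show ?thesis using finW by (meson finite_SigmaI finite_imageI finite_lessThan finite_subset)
  qed
  have span2: "spans_mod K J (A2 N r x \<Gamma> l f t)" using span1 sub by (rule spans_mono)
  have dim: "kdim K J = card (A2 N r x \<Gamma> l f t)" if ind: "indep_mod K J (A2 N r x \<Gamma> l f t)"
    unfolding kdim_def
  proof (rule Least_equality)
    show "\<exists>B. finite B \<and> card B = card (A2 N r x \<Gamma> l f t) \<and> spans_mod K J B"
      using fin2 span2 by blast
  next
    fix m assume "\<exists>B. finite B \<and> card B = m \<and> spans_mod K J B"
    then obtain B where B: "finite B" "card B = m" "spans_mod K J B" by blast
    have "\<forall>a\<in>A2 N r x \<Gamma> l f t. \<exists>d. (\<forall>b\<in>B. d b \<in> K) \<and> a - (\<Sum>b\<in>B. d b * b) \<in> J"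
      using spans_full[OF B(3) B(1) K] by blast
    then show "card (A2 N r x \<Gamma> l f t) \<le> m"
      using exchange[OF JI K one B(1)] fin2 ind B(2) by blast
  qed
  show ?thesis using span1 sub span2 fin2 dim unfolding J_def by blast
qed


end
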